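(* Let $(\Omega, \mathcal R, \mathcal K)$ be a kinetic system that satisfies the detailed balance property. If $\mathcal M \neq \{0\}$, then there exists an $s \in \Omega$ such that the reduced system $(V, \mathcal R_V, \mathcal K[n_s])$, with $V := \Omega \setminus \{s\}$, satisfies the detailed balance condition for any value of $n_s > 0$.
   Context: A kinetic system $(\Omega,\mathcal R,\mathcal K)$ is a bidirectional chemical network with substances $\Omega=\{1,\dots,N\}$, reactions $\mathcal R\subset\mathbb Z^N\setminus\{0\}$ (with $R\in\mathcal R\Rightarrow -R\in\mathcal R$) and mass-action rates $K_R>0$; $I(R)=\{i:R(i)<0\}$, $F(R)=\{i:R(i)>0\}$. It satisfies detailed balance if there is $\overline N\in\mathbb R_+^N$ with $K_R\prod_{i\in I(R)}\overline N_i^{-R(i)}=K_{-R}\prod_{i\in F(R)}\overline N_i^{R(i)}$ for all reactions $R$. $\mathcal M=(\operatorname{span}\mathcal R)^\perp$ is the space of conservation laws. For $U=\{s\}$ and $V=\Omega\setminus\{s\}$, $\pi_V$ is the projection onto coordinates in $V$, the reduced reactions are $\mathcal R_V=\{\pi_V\overline R\neq0:\overline R\in\mathcal R\}$, and the reduced rates are $\mathcal K[n_s](R)=\sum_{\overline R\in\mathcal R:\ \pi_V\overline R=R}K_{\overline R}\, n_s^{-\overline R(s)\mathbf 1[\overline R(s)<0]}$ (i.e. $K_{\overline R}$ multiplied by $n_s^{-\overline R(s)}$ when $s\in I(\overline R)$). *)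

theory Defs
  imports Complex_Main
begin

definition kinetic_system :: "'a set \<Rightarrow> ('a \<Rightarrow> int) set \<Rightarrow> (('a \<Rightarrow> int) \<Rightarrow> real) \<Rightarrow> bool" where
  "kinetic_system \<Omega> \<R> K \<longleftrightarrow>
     finite \<Omega> \<and> finite \<R> \<and>
     (\<forall>R\<in>\<R>. R \<noteq> (\<lambda>_. 0) \<and> (\<lambda>i. - R i) \<in> \<R> \<and> (\<forall>i. i \<notin> \<Omega> \<longrightarrow> R i = 0) \<and> K R > 0)"

definition educts :: "'a set \<Rightarrow> ('a \<Rightarrow> int) \<Rightarrow> 'a set" where
  "educts \<Omega> R = {i\<in>\<Omega>. R i < 0}"

definition products :: "'a set \<Rightarrow> ('a \<Rightarrow> int) \<Rightarrow> 'a set" where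
  "products \<Omega> R = {i\<in>\<Omega>. R i > 0}"

definition detailed_balance :: "'a set \<Rightarrow> ('a \<Rightarrow> int) set \<Rightarrow> (('a \<Rightarrow> int) \<Rightarrow> real) \<Rightarrow> bool" where
  "detailed_balance \<Omega> \<R> K \<longleftrightarrow>
     (\<exists>Nb :: 'a \<Rightarrow> real. (\<forall>i\<in>\<Omega>. Nb i > 0) \<and>
        (\<forall>R\<in>\<R>. K R * (\<Prod>i\<in>educts \<Omega> R. Nb i ^ nat (- R i))
                 = K (\<lambda>i. - R i) * (\<Prod>i\<in>products \<Omega> R. Nb i ^ nat (R i))))"

text \<open>Space of conservation laws M = (span R)^perp, as real vectors on Omega
  (orthogonality to the span is written as orthogonality to the spanning reactions).\<close>
definition conservation_laws :: "'a set \<Rightarrow> ('a \<Rightarrow> int) set \<Rightarrow> ('a \<Rightarrow> real) set" where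
  "conservation_laws \<Omega> \<R> =
     {m. (\<forall>i. i \<notin> \<Omega> \<longrightarrow> m i = 0) \<and> (\<forall>R\<in>\<R>. (\<Sum>i\<in>\<Omega>. m i * of_int (R i)) = 0)}"

definition proj_away :: "'a \<Rightarrow> ('a \<Rightarrow> int) \<Rightarrow> ('a \<Rightarrow> int)" where
  "proj_away s R = (\<lambda>i. if i = s then 0 else R i)"

definition reduced_reactions :: "'a \<Rightarrow> ('a \<Rightarrow> int) set \<Rightarrow> ('a \<Rightarrow> int) set" where
  "reduced_reactions s \<R> = {proj_away s R | R. R \<in> \<R> \<and> proj_away s R \<noteq> (\<lambda>_. 0)}"

text \<open>Reduced rates K[n_s](R) = sum over preimages of K, times n_s^(-R(s)) when s is an educt
  (the exponent nat(-R s) is 0 otherwise).\<close>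
definition reduced_rates :: "'a \<Rightarrow> ('a \<Rightarrow> int) set \<Rightarrow> (('a \<Rightarrow> int) \<Rightarrow> real) \<Rightarrow> real \<Rightarrow> ('a \<Rightarrow> int) \<Rightarrow> real" where
  "reduced_rates s \<R> K ns R =
     (\<Sum>Rb\<in>{Rb\<in>\<R>. proj_away s Rb = R}. K Rb * ns ^ nat (- Rb s))"

end

theory Submission
  imports Defs
begin

lemma prod_educts:
  assumes "finite A"
  shows "(\<Prod>i\<in>{i\<in>A. R i < 0}. f i ^ nat (- R i)) = (\<Prod>i\<in>A. (f i :: real) ^ nat (- R i))"
  by (rule prod.mono_neutral_left) (use assms in \<open>auto simp: not_less\<close>)

lemma prod_products:
  assumes "finite A"
  shows "(\<Prod>i\<in>{i\<in>A. R i > 0}. f i ^ nat (R i)) = (\<Prod>i\<in>A. (f i :: real) ^ nat (R i))"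
  by (rule prod.mono_neutral_left) (use assms in \<open>auto simp: not_less\<close>)

lemma prod_scale:
  "(\<Prod>i\<in>A. (N i * exp (t * m i)) ^ n i) = (\<Prod>i\<in>A. N i ^ n i) * exp (t * (\<Sum>i\<in>A. m i * real (n i)))"
proof -
  have "(\<Prod>i\<in>A. (N i * exp (t * m i)) ^ n i) = (\<Prod>i\<in>A. N i ^ n i * exp (t * (m i * real (n i))))"
    by (rule prod.cong) (auto simp: power_mult_distrib exp_of_nat_mult[symmetric] algebra_simps)
  also have "\<dots> = (\<Prod>i\<in>A. N i ^ n i) * (\<Prod>i\<in>A. exp (t * (m i * real (n i))))"
    by (rule prod.distrib)
  also have "(\<Prod>i\<in>A. exp (t * (m i * real (n i)))) = exp (t * (\<Sum>i\<in>A. m i * real (n i)))"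
    by (cases "finite A") (simp_all add: exp_sum sum_distrib_left)
  finally show ?thesis .
qed

lemma sum_nat_eq:
  assumes "(\<Sum>i\<in>A. m i * of_int (R i)) = (0::real)"
  shows "(\<Sum>i\<in>A. m i * real (nat (- R i))) = (\<Sum>i\<in>A. m i * real (nat (R i)))"
proof -
  have "(\<Sum>i\<in>A. m i * real (nat (R i))) - (\<Sum>i\<in>A. m i * real (nat (- R i)))
      = (\<Sum>i\<in>A. m i * of_int (R i))"
    by (simp add: sum_subtractf[symmetric] right_diff_distrib[symmetric]) (rule sum.cong, auto)
  with assms show ?thesis by simp
qed

lemma prod_split:
  assumes "finite A" "s \<in> A"
  shows "(\<Prod>i\<in>A. (f i::real) ^ nat (g i)) = f s ^ nat (g s) * (\<Prod>i\<in>A - {s}. f i ^ nat (proj_away s g i))"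
proof -
  have "(\<Prod>i\<in>A - {s}. f i ^ nat (proj_away s g i)) = (\<Prod>i\<in>A - {s}. f i ^ nat (g i))"
    by (rule prod.cong) (auto simp: proj_away_def)
  then show ?thesis using assms by (simp add: prod.remove)
qed

theorem corollary5p2:
  fixes \<Omega> :: "'a set" and \<R> :: "('a \<Rightarrow> int) set" and K :: "('a \<Rightarrow> int) \<Rightarrow> real"
  assumes "kinetic_system \<Omega> \<R> K"
    and "detailed_balance \<Omega> \<R> K"
    and "conservation_laws \<Omega> \<R> \<noteq> {\<lambda>_. 0}"
  shows "\<exists>s\<in>\<Omega>. \<forall>ns::real. ns > 0 \<longrightarrow>
           detailed_balance (\<Omega> - {s}) (reduced_reactions s \<R>) (reduced_rates s \<R> K ns)"
proof -
  have fin: "finite \<Omega>" and ks: "\<And>R. R \<in> \<R> \<Longrightarrow> (\<lambda>i. - R i) \<in> \<R>"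
    using assms(1) by (auto simp: kinetic_system_def)
  obtain Nb where Nbpos: "\<forall>i\<in>\<Omega>. Nb i > 0" and
    db: "\<And>R. R\<in>\<R> \<Longrightarrow> K R * (\<Prod>i\<in>educts \<Omega> R. Nb i ^ nat (- R i))
                 = K (\<lambda>i. - R i) * (\<Prod>i\<in>products \<Omega> R. Nb i ^ nat (R i))"
    using assms(2) unfolding detailed_balance_def by blast
  have "(\<lambda>_. 0) \<in> conservation_laws \<Omega> \<R>" by (simp add: conservation_laws_def)
  then obtain m where m: "m \<in> conservation_laws \<Omega> \<R>" "m \<noteq> (\<lambda>_. 0)" using assms(3) by blast
  then obtain s where ms: "m s \<noteq> 0" by auto
  have mz: "\<And>i. i \<notin> \<Omega> \<Longrightarrow> m i = 0" and mR: "\<And>R. R \<in> \<R> \<Longrightarrow> (\<Sum>i\<in>\<Omega>. m i * of_int (R i)) = 0"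
    using m(1) by (auto simp: conservation_laws_def)
  have sO: "s \<in> \<Omega>" using ms mz by blast
  show ?thesis
  proof (intro bexI[OF _ sO] allI impI)
    fix ns :: real assume ns: "ns > 0"
    define t where "t = ln (ns / Nb s) / m s"
    define Nt where "Nt = (\<lambda>i. Nb i * exp (t * m i))"
    have Ntpos: "\<And>i. i \<in> \<Omega> \<Longrightarrow> Nt i > 0" using Nbpos by (simp add: Nt_def)
    have Nts: "Nt s = ns" using ns Nbpos sO ms by (simp add: Nt_def t_def less_imp_neq[symmetric])
    have dbt: "K R * (\<Prod>i\<in>\<Omega>. Nt i ^ nat (- R i)) = K (\<lambda>i. - R i) * (\<Prod>i\<in>\<Omega>. Nt i ^ nat (R i))"
      if R: "R \<in> \<R>" for R
    proof -
      have e: "(\<Prod>i\<in>\<Omega>. Nt i ^ nat (- R i)) = (\<Prod>i\<in>\<Omega>. Nb i ^ nat (- R i)) * exp (t * (\<Sum>i\<in>\<Omega>. m i * real (nat (- R i))))"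
        unfolding Nt_def by (rule prod_scale)
      have p: "(\<Prod>i\<in>\<Omega>. Nt i ^ nat (R i)) = (\<Prod>i\<in>\<Omega>. Nb i ^ nat (R i)) * exp (t * (\<Sum>i\<in>\<Omega>. m i * real (nat (- R i))))"
        unfolding Nt_def sum_nat_eq[OF mR[OF R]] by (rule prod_scale)
      have "K R * (\<Prod>i\<in>\<Omega>. Nb i ^ nat (- R i)) = K (\<lambda>i. - R i) * (\<Prod>i\<in>\<Omega>. Nb i ^ nat (R i))"
        using db[OF R] by (simp add: educts_def products_def prod_educts[OF fin] prod_products[OF fin])
      then show ?thesis unfolding e p by (simp add: mult.assoc[symmetric])
    qed
    let ?V = "\<Omega> - {s}"
    have finV: "finite ?V" using fin by simp
    have key: "K Rb * ns ^ nat (- Rb s) * (\<Prod>i\<in>?V. Nt i ^ nat (- proj_away s Rb i))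
        = K (\<lambda>i. - Rb i) * ns ^ nat (Rb s) * (\<Prod>i\<in>?V. Nt i ^ nat (proj_away s Rb i))"
      if Rb: "Rb \<in> \<R>" for Rb
    proof -
      have a: "(\<Prod>i\<in>\<Omega>. Nt i ^ nat (- Rb i)) = ns ^ nat (- Rb s) * (\<Prod>i\<in>?V. Nt i ^ nat (- proj_away s Rb i))"
        using prod_split[OF fin sO, of Nt "\<lambda>i. - Rb i"] Nts by (simp add: proj_away_def)
      have b: "(\<Prod>i\<in>\<Omega>. Nt i ^ nat (Rb i)) = ns ^ nat (Rb s) * (\<Prod>i\<in>?V. Nt i ^ nat (proj_away s Rb i))"
        using prod_split[OF fin sO, of Nt Rb] Nts by simp
      show ?thesis using dbt[OF Rb] unfolding a b by (simp add: mult.assoc)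
    qed
    show "detailed_balance ?V (reduced_reactions s \<R>) (reduced_rates s \<R> K ns)"
      unfolding detailed_balance_def
    proof (intro exI[of _ Nt] conjI ballI)
      show "\<And>i. i \<in> ?V \<Longrightarrow> Nt i > 0" using Ntpos by simp
      fix R assume "R \<in> reduced_reactions s \<R>"
      define S where "S = (\<lambda>R. {Rb\<in>\<R>. proj_away s Rb = R})"
      have L: "reduced_rates s \<R> K ns R * (\<Prod>i\<in>educts ?V R. Nt i ^ nat (- R i))
          = (\<Sum>Rb\<in>S R. K Rb * ns ^ nat (- Rb s) * (\<Prod>i\<in>?V. Nt i ^ nat (- proj_away s Rb i)))"
        unfolding reduced_rates_def educts_def prod_educts[OF finV] S_def sum_distrib_right
        by (rule sum.cong) auto
      also have "\<dots> = (\<Sum>Rb\<in>S R. K (\<lambda>i. - Rb i) * ns ^ nat (Rb s) * (\<Prod>i\<in>?V. Nt i ^ nat (proj_away s Rb i)))"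
        by (rule sum.cong) (auto simp: S_def key)
      also have "\<dots> = (\<Sum>Rb\<in>S (\<lambda>i. - R i). K Rb * ns ^ nat (- Rb s) * (\<Prod>i\<in>?V. Nt i ^ nat (R i)))"
      proof (rule sum.reindex_bij_witness[where i="\<lambda>R i. - R i" and j="\<lambda>R i. - R i"])
        fix a assume a: "a \<in> S (\<lambda>i. - R i)"
        have "proj_away s (\<lambda>i. - a i) = (\<lambda>i. - proj_away s a i)" by (auto simp: proj_away_def)
        also have "\<dots> = R" using a by (simp add: S_def)
        finally show "(\<lambda>i. - a i) \<in> S R" using a by (simp add: S_def ks)
      next
        fix a assume a: "a \<in> S R"
        have "proj_away s (\<lambda>i. - a i) = (\<lambda>i. - proj_away s a i)" by (auto simp: proj_away_def)
        also have "\<dots> = (\<lambda>i. - R i)" using a by (simp add: S_def)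
        finally show "(\<lambda>i. - a i) \<in> S (\<lambda>i. - R i)" using a by (simp add: S_def ks)
      qed (auto simp: S_def)
      also have "\<dots> = reduced_rates s \<R> K ns (\<lambda>i. - R i) * (\<Prod>i\<in>products ?V R. Nt i ^ nat (R i))"
        unfolding reduced_rates_def products_def prod_products[OF finV] S_def sum_distrib_right ..
      finally show "reduced_rates s \<R> K ns R * (\<Prod>i\<in>educts ?V R. Nt i ^ nat (- R i)) =
         reduced_rates s \<R> K ns (\<lambda>i. - R i) * (\<Prod>i\<in>products ?V R. Nt i ^ nat (R i))" .
    qed
  qed
qed

end
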